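(* Let $\mathcal{B}$ be a building set on $[d]$. The nestohedron $\Delta_{\mathcal{B}}$ is inscribed if and only if for all $J\subseteq[d]$ the following holds: whenever $i,j,k\in J$ satisfy $n^k_{i,j}(\mathcal{B}|_J)>0$ and $n^i_{j,k}(\mathcal{B}|_J)>0$, then $n^k_{i,j}(\mathcal{B}|_J)=n^i_{j,k}(\mathcal{B}|_J)=n^j_{i,k}(\mathcal{B}|_J)$.
   Context: A building set is a collection $\mathcal{B}$ of subsets of $[d]=\{1,\dots,d\}$ such that $I\cap J\neq\emptyset$ implies $I\cup J\in\mathcal{B}$ for all $I,J\in\mathcal{B}$. For $I\subseteq[d]$, $\Delta_I=\mathrm{conv}(e_i:i\in I)$, and the nestohedron is the Minkowski sum $\Delta_{\mathcal{B}}=\sum_{I\in\mathcal{B}}\Delta_I$. For $i,j,k\in[d]$, $n^k_{i,j}(\mathcal{B})$ is the number of $I\in\mathcal{B}$ with $i,j\in I$ and $k\notin I$. The restriction is $\mathcal{B}|_J=\{I\in\mathcal{B}:I\subseteq J\}$. A polytope is inscribed if all its vertices lie on a common sphere. *)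

theory Defs
  imports "HOL-Analysis.Analysis"
begin

text \<open>The ground set [d] is the finite type 'n; R^d is real^'n.
  A building set: a collection of nonempty subsets closed under unions of intersecting members.\<close>

definition building_set :: "'n set set \<Rightarrow> bool" where
  "building_set B \<longleftrightarrow> {} \<notin> B \<and>
     (\<forall>I\<in>B. \<forall>J\<in>B. I \<inter> J \<noteq> {} \<longrightarrow> I \<union> J \<in> B)"

definition simplex_face :: "('n::finite) set \<Rightarrow> (real^'n) set" where
  "simplex_face I = convex hull ((\<lambda>i. axis i 1) ` I)"

definition nestohedron :: "('n::finite) set set \<Rightarrow> (real^'n) set" where
  "nestohedron B = {(\<Sum>I\<in>B. p I) | p. \<forall>I\<in>B. p I \<in> simplex_face I}"

definition inscribed :: "('a::real_normed_vector) set \<Rightarrow> bool" where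
  "inscribed P \<longleftrightarrow> (\<exists>c r. {v. v extreme_point_of P} \<subseteq> sphere c r)"

definition ncount :: "'n set set \<Rightarrow> 'n \<Rightarrow> 'n \<Rightarrow> 'n \<Rightarrow> nat" where
  "ncount B k i j = card {I\<in>B. i \<in> I \<and> j \<in> I \<and> k \<notin> I}"

definition restrict_bset :: "'n set set \<Rightarrow> 'n set \<Rightarrow> 'n set set" where
  "restrict_bset B J = {I\<in>B. I \<subseteq> J}"

end

theory Submission
  imports Defs
begin

definition topw :: "('n \<Rightarrow> 'a::linorder) \<Rightarrow> 'n set \<Rightarrow> 'n" where
  "topw w I = (THE x. x \<in> I \<and> (\<forall>y\<in>I. w y \<le> w x))"

lemma topw_eq:
  assumes "inj w" "x \<in> I" "\<forall>y\<in>I. w y \<le> w x"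
  shows "topw w I = x"
  unfolding topw_def
proof (rule the_equality)
  show "x \<in> I \<and> (\<forall>y\<in>I. w y \<le> w x)" using assms by auto
next
  fix z assume z: "z \<in> I \<and> (\<forall>y\<in>I. w y \<le> w z)"
  then have "w z \<le> w x" "w x \<le> w z" using assms by auto
  then have "w z = w x" by (rule order_antisym)
  then show "z = x" using assms(1) by (simp add: inj_eq)
qed

lemma topw:
  assumes "inj w" "finite I" "I \<noteq> {}"
  shows "topw w I \<in> I" "\<forall>y\<in>I. w y \<le> w (topw w I)"
proof -
  have "Max (w ` I) \<in> w ` I" using assms by (intro Max_in) auto
  then obtain x where x: "x \<in> I" "w x = Max (w ` I)" by auto
  have *: "\<forall>y\<in>I. w y \<le> w x"
  proof
    fix y assume "y \<in> I"
    then have "w y \<le> Max (w ` I)" using assms(2) by (intro Max_ge) auto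
    then show "w y \<le> w x" using x by simp
  qed
  have "topw w I = x" by (rule topw_eq[OF assms(1) x(1) *])
  then show "topw w I \<in> I" "\<forall>y\<in>I. w y \<le> w (topw w I)" using x * by auto
qed

lemma topw_iff:
  assumes "inj w" "finite I" "I \<noteq> {}"
  shows "topw w I = x \<longleftrightarrow> x \<in> I \<and> (\<forall>y\<in>I. w y \<le> w x)"
proof
  assume "topw w I = x" then show "x \<in> I \<and> (\<forall>y\<in>I. w y \<le> w x)" using topw[OF assms] by simp
next
  assume "x \<in> I \<and> (\<forall>y\<in>I. w y \<le> w x)" then show "topw w I = x" using topw_eq[OF assms(1)] by simp
qed
definition vert :: "'n set set \<Rightarrow> ('n::finite \<Rightarrow> 'a::linorder) \<Rightarrow> real^'n" where
  "vert B w = (\<Sum>I\<in>B. axis (topw w I) 1)"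

lemma vert_nth: "vert B w $ x = real (card {I\<in>B. topw w I = x})"
proof -
  have "vert B w $ x = (\<Sum>I\<in>B. if topw w I = x then 1 else 0)"
    unfolding vert_def by (auto simp: axis_def intro!: sum.cong)
  also have "\<dots> = real (card {I\<in>B. topw w I = x})"
    by (simp add: sum.If_cases Int_def)
  finally show ?thesis .
qed

lemma swap_inj:
  assumes "inj w" shows "inj (w(a := w b, b := w a))"
  using assms unfolding inj_def by (auto split: if_splits)

lemma swap_top:
  fixes w :: "'n \<Rightarrow> 'a::linorder"
  assumes inj: "inj w" and ab: "w a < w b" and adj: "\<forall>c. \<not> (w a < w c \<and> w c < w b)"
    and fin: "finite I" "I \<noteq> {}"
  shows "topw (w(a := w b, b := w a)) I = (if a \<in> I \<and> b \<in> I \<and> topw w I = b then a else topw w I)"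
proof -
  define w' where "w' = w(a := w b, b := w a)"
  have anb: "a \<noteq> b" using ab by auto
  have inj': "inj w'" unfolding w'_def by (rule swap_inj[OF inj])
  define t where "t = topw w I"
  have t: "t \<in> I" "\<forall>y\<in>I. w y \<le> w t" unfolding t_def by (rule topw[OF inj fin])+
  have wa: "w' a = w b" and wb: "w' b = w a" and wo: "\<And>y. y \<noteq> a \<Longrightarrow> y \<noteq> b \<Longrightarrow> w' y = w y"
    using anb unfolding w'_def by auto
  show ?thesis
  proof (cases "a \<in> I \<and> b \<in> I \<and> t = b")
    case True
    have "\<forall>y\<in>I. w' y \<le> w' a"
    proof
      fix y assume y: "y \<in> I"
      show "w' y \<le> w' a"
        using True t y ab wa wb wo[of y] by (cases "y = a"; cases "y = b") auto
    qed
    then have "topw w' I = a" using topw_eq[OF inj'] True by blast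
    then show ?thesis using True t_def w'_def by simp
  next
    case False
    have "\<forall>y\<in>I. w' y \<le> w' t"
    proof
      fix y assume y: "y \<in> I"
      have wy: "w y \<le> w t" using t y by auto
      show "w' y \<le> w' t"
      proof (cases "t = a")
        case True
        then show ?thesis using wy ab wa wb wo[of y] by (cases "y = a"; cases "y = b") auto
      next
        case ta: False
        show ?thesis
        proof (cases "t = b")
          case True
          then have "a \<notin> I" using False t by auto
          then have "y \<noteq> a" using y by auto
          show ?thesis
          proof (cases "y = b")
            case True then show ?thesis using \<open>t = b\<close> by simp
          next
            case False
            then have "w y < w b" using wy \<open>t = b\<close> inj by (metis inj_eq order_le_less)
            then have "w y \<le> w a" using adj by (meson not_le)
            then show ?thesis using wb wo[OF \<open>y \<noteq> a\<close> False] \<open>t = b\<close> by simp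
          qed
        next
          case tb: False
          have wt: "w' t = w t" using wo[OF ta tb] .
          show ?thesis
          proof (cases "y = a")
            case True
            then have "w a < w t" using wy ta inj by (metis inj_eq order_le_less)
            then have "w b \<le> w t" using adj by (meson not_le)
            then show ?thesis using True wa wt by simp
          next
            case ya: False
            show ?thesis
            proof (cases "y = b")
              case True
              then show ?thesis using wb wt wy ab by simp
            next
              case False
              then show ?thesis using wo[OF ya False] wt wy by simp
            qed
          qed
        qed
      qed
    qed
    then have "topw w' I = t" using topw_eq[OF inj'] t by blast
    then have 1: "topw w' I = topw w I" using t_def by simp
    have nc: "\<not> (a \<in> I \<and> b \<in> I \<and> topw w I = b)" using False t_def by simp
    show ?thesis unfolding if_not_P[OF nc] using 1 by (simp only: w'_def)
  qed
qed

definition Dcnt :: "'n set set \<Rightarrow> 'n set \<Rightarrow> 'n \<Rightarrow> 'n \<Rightarrow> int" where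
  "Dcnt B P a b = int (card {I\<in>B. I \<subseteq> P \<and> a \<in> I \<and> b \<notin> I}) - int (card {I\<in>B. I \<subseteq> P \<and> b \<in> I \<and> a \<notin> I})"

lemma swap_vert:
  fixes w :: "'n::finite \<Rightarrow> 'a::linorder" and B :: "'n set set"
  assumes inj: "inj w" and ab: "w a < w b" and adj: "\<forall>c. \<not> (w a < w c \<and> w c < w b)"
    and ne: "{} \<notin> B"
  defines "P \<equiv> {x. w x \<le> w b}" and "N \<equiv> card {I\<in>B. I \<subseteq> {x. w x \<le> w b} \<and> a \<in> I \<and> b \<in> I}"
  shows "\<forall>x. x \<noteq> a \<longrightarrow> x \<noteq> b \<longrightarrow> vert B (w(a := w b, b := w a)) $ x = vert B w $ x"
    and "vert B (w(a := w b, b := w a)) $ a = vert B w $ a + N"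
    and "vert B (w(a := w b, b := w a)) $ b = vert B w $ b - N"
    and "vert B w $ a - vert B w $ b + N = real_of_int (Dcnt B P a b)"
proof -
  define w' where "w' = w(a := w b, b := w a)"
  have anb: "a \<noteq> b" using ab by auto
  have fin: "finite I" "I \<noteq> {}" if "I \<in> B" for I using ne that by auto
  have tw': "topw w' I = (if a \<in> I \<and> b \<in> I \<and> topw w I = b then a else topw w I)" if "I \<in> B" for I
    unfolding w'_def by (rule swap_top[OF inj ab adj fin[OF that]])
  have topb: "topw w I = b \<longleftrightarrow> b \<in> I \<and> I \<subseteq> P" if "I \<in> B" for I
    unfolding topw_iff[OF inj fin[OF that]] P_def by auto
  have topa: "topw w I = a \<longleftrightarrow> a \<in> I \<and> I \<subseteq> P \<and> b \<notin> I" if "I \<in> B" for I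
  proof -
    have "(\<forall>y\<in>I. w y \<le> w a) \<longleftrightarrow> I \<subseteq> P \<and> b \<notin> I"
    proof
      assume h: "\<forall>y\<in>I. w y \<le> w a"
      have "I \<subseteq> P" using h ab unfolding P_def by (auto intro: order.trans)
      moreover have "b \<notin> I" using h ab by (meson not_le)
      ultimately show "I \<subseteq> P \<and> b \<notin> I" by simp
    next
      assume h: "I \<subseteq> P \<and> b \<notin> I"
      show "\<forall>y\<in>I. w y \<le> w a"
      proof
        fix y assume y: "y \<in> I"
        then have "w y \<le> w b" "y \<noteq> b" using h unfolding P_def by auto
        then have "w y < w b" using inj by (metis inj_eq order_le_less)
        then show "w y \<le> w a" using adj by (meson not_le)
      qed
    qed
    then show ?thesis unfolding topw_iff[OF inj fin[OF that]] by simp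
  qed
  define S where "S = {I\<in>B. I \<subseteq> P \<and> a \<in> I \<and> b \<in> I}"
  have finB: "finite B" by simp
  show "\<forall>x. x \<noteq> a \<longrightarrow> x \<noteq> b \<longrightarrow> vert B (w(a := w b, b := w a)) $ x = vert B w $ x"
  proof (intro allI impI)
    fix x assume "x \<noteq> a" "x \<noteq> b"
    then have "{I\<in>B. topw w' I = x} = {I\<in>B. topw w I = x}" using tw' by auto
    then show "vert B (w(a := w b, b := w a)) $ x = vert B w $ x" unfolding vert_nth w'_def by simp
  qed
  have ea: "{I\<in>B. topw w' I = a} = {I\<in>B. topw w I = a} \<union> S"
  proof (rule set_eqI)
    fix I show "I \<in> {I\<in>B. topw w' I = a} \<longleftrightarrow> I \<in> {I\<in>B. topw w I = a} \<union> S"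
    proof (cases "I \<in> B")
      case True
      show ?thesis using tw'[OF True] topb[OF True] topa[OF True] anb True unfolding S_def by auto
    qed (auto simp: S_def)
  qed
  have da: "{I\<in>B. topw w I = a} \<inter> S = {}" using topb topa anb unfolding S_def by auto
  show "vert B (w(a := w b, b := w a)) $ a = vert B w $ a + N"
    unfolding vert_nth w'_def[symmetric] ea N_def S_def[symmetric]
    using card_Un_disjoint[OF _ _ da] finB by (simp add: S_def P_def)
  have eb: "{I\<in>B. topw w' I = b} = {I\<in>B. topw w I = b} - S"
  proof (rule set_eqI)
    fix I show "I \<in> {I\<in>B. topw w' I = b} \<longleftrightarrow> I \<in> {I\<in>B. topw w I = b} - S"
    proof (cases "I \<in> B")
      case True
      show ?thesis using tw'[OF True] topb[OF True] anb True unfolding S_def by auto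
    qed (auto simp: S_def)
  qed
  have sb: "S \<subseteq> {I\<in>B. topw w I = b}" using topb unfolding S_def by auto
  have cS: "card S \<le> card {I\<in>B. topw w I = b}" using sb by (intro card_mono) auto
  show "vert B (w(a := w b, b := w a)) $ b = vert B w $ b - N"
    unfolding vert_nth w'_def[symmetric] eb N_def S_def[symmetric]
    using card_Diff_subset[OF _ sb] cS by (simp add: of_nat_diff S_def P_def)
  have va: "{I\<in>B. topw w I = a} = {I\<in>B. I \<subseteq> P \<and> a \<in> I \<and> b \<notin> I}" using topa by auto
  have vb: "{I\<in>B. topw w I = b} = {I\<in>B. I \<subseteq> P \<and> b \<in> I \<and> a \<notin> I} \<union> S" using topb unfolding S_def by auto
  have db: "{I\<in>B. I \<subseteq> P \<and> b \<in> I \<and> a \<notin> I} \<inter> S = {}" unfolding S_def by auto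
  show "vert B w $ a - vert B w $ b + N = real_of_int (Dcnt B P a b)"
    unfolding vert_nth va vb Dcnt_def N_def S_def[symmetric]
    using card_Un_disjoint[OF _ _ db] finB by (simp add: S_def P_def)
qed

lemma norm_swap:
  fixes v v' c :: "real^'n::finite"
  assumes anb: "a \<noteq> b" and o: "\<forall>x. x \<noteq> a \<longrightarrow> x \<noteq> b \<longrightarrow> v' $ x = v $ x"
    and va: "v' $ a = v $ a + N" and vb: "v' $ b = v $ b - N"
  shows "(norm (v' - c))\<^sup>2 - (norm (v - c))\<^sup>2 = 2 * N * (v $ a - v $ b + N - c $ a + c $ b)"
proof -
  define g where "g i = ((v' - c) $ i)\<^sup>2 - ((v - c) $ i)\<^sup>2" for i
  have n2: "(norm x)\<^sup>2 = (\<Sum>i\<in>UNIV. (x $ i)\<^sup>2)" for x :: "real^'n"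
    unfolding power2_norm_eq_inner inner_vec_def by (simp add: power2_eq_square)
  have "(norm (v' - c))\<^sup>2 - (norm (v - c))\<^sup>2 = (\<Sum>i\<in>UNIV. g i)"
    unfolding n2 g_def by (simp add: sum_subtractf)
  also have "\<dots> = (\<Sum>i\<in>{a,b}. g i)"
    by (rule sum.mono_neutral_right) (auto simp: g_def o)
  also have "\<dots> = g a + g b" using anb by simp
  also have "\<dots> = 2 * N * (v $ a - v $ b + N - c $ a + c $ b)"
    unfolding g_def vector_minus_component va vb by (simp add: power2_eq_square algebra_simps)
  finally show ?thesis .
qed

lemma swap_dist:
  fixes w :: "'n::finite \<Rightarrow> 'a::linorder" and B :: "'n set set" and c :: "real^'n"
  assumes inj: "inj w" and ab: "w a < w b" and adj: "\<forall>c. \<not> (w a < w c \<and> w c < w b)"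
    and ne: "{} \<notin> B"
  defines "P \<equiv> {x. w x \<le> w b}" and "N \<equiv> card {I\<in>B. I \<subseteq> {x. w x \<le> w b} \<and> a \<in> I \<and> b \<in> I}"
  shows "(norm (vert B (w(a := w b, b := w a)) - c))\<^sup>2 - (norm (vert B w - c))\<^sup>2
     = 2 * real N * (real_of_int (Dcnt B P a b) - c $ a + c $ b)"
proof -
  note sv = swap_vert[OF inj ab adj ne]
  have anb: "a \<noteq> b" using ab by auto
  have "(norm (vert B (w(a := w b, b := w a)) - c))\<^sup>2 - (norm (vert B w - c))\<^sup>2
     = 2 * real N * (vert B w $ a - vert B w $ b + real N - c $ a + c $ b)"
    using norm_swap[OF anb sv(1) sv(2) sv(3)] unfolding N_def P_def by simp
  also have "\<dots> = 2 * real N * (real_of_int (Dcnt B P a b) - c $ a + c $ b)"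
    using sv(4) unfolding N_def P_def by simp
  finally show ?thesis .
qed

lemma set_sum_insert:
  fixes S :: "'i \<Rightarrow> ('v::comm_monoid_add) set"
  assumes fin: "finite A" and J: "J \<notin> A"
  shows "{\<Sum>I\<in>insert J A. p I | p. \<forall>I\<in>insert J A. p I \<in> S I}
       = S J + {\<Sum>I\<in>A. p I | p. \<forall>I\<in>A. p I \<in> S I}"
proof (rule set_eqI, rule iffI)
  fix x assume "x \<in> {\<Sum>I\<in>insert J A. p I | p. \<forall>I\<in>insert J A. p I \<in> S I}"
  then obtain p where x: "x = (\<Sum>I\<in>insert J A. p I)" and p: "\<forall>I\<in>insert J A. p I \<in> S I" by blast
  have "x = p J + (\<Sum>I\<in>A. p I)" using x fin J by simp
  moreover have "p J \<in> S J" using p by simp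
  moreover have "(\<Sum>I\<in>A. p I) \<in> {\<Sum>I\<in>A. p I | p. \<forall>I\<in>A. p I \<in> S I}" using p by blast
  ultimately show "x \<in> S J + {\<Sum>I\<in>A. p I | p. \<forall>I\<in>A. p I \<in> S I}" by (simp add: set_plus_intro)
next
  fix x assume "x \<in> S J + {\<Sum>I\<in>A. p I | p. \<forall>I\<in>A. p I \<in> S I}"
  then obtain y z where xyz: "x = y + z" and y: "y \<in> S J" and z: "z \<in> {\<Sum>I\<in>A. p I | p. \<forall>I\<in>A. p I \<in> S I}"
    by (auto elim!: set_plus_elim)
  then obtain q where zq: "z = (\<Sum>I\<in>A. q I)" and q: "\<forall>I\<in>A. q I \<in> S I" by blast
  define p where "p = q(J := y)"
  have "(\<Sum>I\<in>A. p I) = (\<Sum>I\<in>A. q I)" unfolding p_def using J by (intro sum.cong) auto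
  then have "x = (\<Sum>I\<in>insert J A. p I)" using xyz zq fin J by (simp add: p_def)
  moreover have "\<forall>I\<in>insert J A. p I \<in> S I" using q y unfolding p_def by auto
  ultimately show "x \<in> {\<Sum>I\<in>insert J A. p I | p. \<forall>I\<in>insert J A. p I \<in> S I}" by blast
qed

lemma sum_hull:
  fixes V :: "'i \<Rightarrow> ('v::real_vector) set"
  assumes "finite A"
  shows "{\<Sum>I\<in>A. p I | p. \<forall>I\<in>A. p I \<in> convex hull (V I)} = convex hull {\<Sum>I\<in>A. p I | p. \<forall>I\<in>A. p I \<in> V I}"
  using assms
proof (induction A rule: finite_induct)
  case empty
  then show ?case by simp
next
  case (insert J A)
  show ?case
    unfolding set_sum_insert[OF insert(1,2)] insert(3) convex_hull_set_plus by simp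
qed

definition Wset :: "('n::finite) set set \<Rightarrow> (real^'n) set" where
  "Wset B = {\<Sum>I\<in>B. p I | p. \<forall>I\<in>B. p I \<in> (\<lambda>i. axis i 1) ` I}"

lemma nest_hull: "nestohedron B = convex hull (Wset B)"
proof -
  have "nestohedron B = {\<Sum>I\<in>B. p I | p. \<forall>I\<in>B. p I \<in> convex hull ((\<lambda>i. axis i 1) ` I)}"
    unfolding nestohedron_def simplex_face_def by simp
  also have "\<dots> = convex hull (Wset B)" unfolding Wset_def by (rule sum_hull) simp
  finally show ?thesis .
qed

lemma finite_Wset: "finite (Wset B)"
proof -
  have "Wset B \<subseteq> (\<lambda>m. \<Sum>I\<in>B. axis (m I) (1::real)) ` UNIV"
  proof
    fix x assume "x \<in> Wset B"
    then obtain p where x: "x = (\<Sum>I\<in>B. p I)" and p: "\<forall>I\<in>B. p I \<in> (\<lambda>i. axis i 1) ` I"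
      unfolding Wset_def by blast
    define m where "m I = (SOME i. p I = axis i 1)" for I
    have "p I = axis (m I) 1" if "I \<in> B" for I
    proof -
      have "\<exists>i. p I = axis i 1" using p that by blast
      then show ?thesis unfolding m_def by (rule someI_ex)
    qed
    then have "x = (\<Sum>I\<in>B. axis (m I) 1)" using x by (auto intro: sum.cong)
    then show "x \<in> (\<lambda>m. \<Sum>I\<in>B. axis (m I) (1::real)) ` UNIV" by blast
  qed
  then show ?thesis by (rule finite_subset) simp
qed

lemma polytope_nest: "polytope (nestohedron B)"
  unfolding nest_hull by (rule polytope_convex_hull[OF finite_Wset])

lemma face_le:
  fixes a :: "real^'n::finite"
  assumes "p \<in> simplex_face I" "\<forall>i\<in>I. a $ i \<le> M"
  shows "a \<bullet> p \<le> M"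
proof -
  have "convex hull ((\<lambda>i. axis i 1) ` I) \<subseteq> {z. a \<bullet> z \<le> M}"
    by (rule hull_minimal) (use assms(2) in \<open>auto simp: inner_axis convex_halfspace_le\<close>)
  then show ?thesis using assms(1) unfolding simplex_face_def by auto
qed

lemma vert_in:
  assumes "{} \<notin> B" "inj w"
  shows "vert B w \<in> nestohedron B"
proof -
  have "axis (topw w I) 1 \<in> simplex_face I" if "I \<in> B" for I
  proof -
    have "topw w I \<in> I" using topw(1)[OF assms(2)] that assms(1) by (metis finite)
    then show ?thesis unfolding simplex_face_def by (meson hull_subset imageI subsetD)
  qed
  then show ?thesis unfolding nestohedron_def vert_def by blast
qed

lemma nest_le:
  fixes a :: "real^'n::finite"
  assumes "y \<in> nestohedron B" "inj w" "{} \<notin> B" "\<forall>i j. w i \<le> w j \<longrightarrow> a $ i \<le> a $ j"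
  shows "a \<bullet> y \<le> a \<bullet> vert B w"
proof -
  obtain p where y: "y = (\<Sum>I\<in>B. p I)" and p: "\<forall>I\<in>B. p I \<in> simplex_face I"
    using assms(1) unfolding nestohedron_def by blast
  have "a \<bullet> y = (\<Sum>I\<in>B. a \<bullet> p I)" unfolding y by (simp add: inner_sum_right)
  also have "\<dots> \<le> (\<Sum>I\<in>B. a $ topw w I)"
  proof (rule sum_mono)
    fix I assume I: "I \<in> B"
    have "\<forall>y\<in>I. w y \<le> w (topw w I)" using topw(2)[OF assms(2)] I assms(3) by (metis finite)
    then have "\<forall>i\<in>I. a $ i \<le> a $ topw w I" using assms(4) by blast
    then show "a \<bullet> p I \<le> a $ topw w I" using face_le p I by blast
  qed
  also have "\<dots> = a \<bullet> vert B w" unfolding vert_def by (simp add: inner_sum_right inner_axis)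
  finally show ?thesis .
qed

lemma extreme_is_vert:
  fixes B :: "('n::finite) set set"
  assumes ne: "{} \<notin> B" and x: "x extreme_point_of nestohedron B"
  shows "\<exists>w::'n \<Rightarrow> nat. inj w \<and> x = vert B w"
proof -
  have "{x} face_of nestohedron B" using x by (simp add: face_of_singleton)
  then have "{x} exposed_face_of nestohedron B"
    using exposed_face_of_polyhedron polytope_imp_polyhedron polytope_nest by blast
  then obtain a b where hs: "nestohedron B \<subseteq> {y. a \<bullet> y \<le> b}"
      and ex: "{x} = nestohedron B \<inter> {y. a \<bullet> y = b}"
    unfolding exposed_face_of_def by blast
  obtain r :: "'n \<Rightarrow> nat" and n where "r ` UNIV = {i. i < n}" "inj_on r UNIV"
    using finite_imp_inj_to_nat_seg[of "UNIV :: 'n set"] by auto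
  then have rinj: "inj r" by simp
  define lt where "lt y z \<longleftrightarrow> a $ y < a $ z \<or> (a $ y = a $ z \<and> r y < r z)" for y z
  define w where "w z = card {y. lt y z}" for z
  have lt_trans: "lt y u" if "lt y z" "lt z u" for y z u
    using that unfolding lt_def by auto
  have lt_w: "w y < w z" if "lt y z" for y z
  proof -
    have "{u. lt u y} \<subset> {u. lt u z}"
    proof
      show "{u. lt u y} \<subseteq> {u. lt u z}" using lt_trans that by blast
      have "y \<in> {u. lt u z}" "y \<notin> {u. lt u y}" using that unfolding lt_def by auto
      then show "{u. lt u y} \<noteq> {u. lt u z}" by blast
    qed
    then show ?thesis unfolding w_def by (intro psubset_card_mono) auto
  qed
  have tot: "lt y z \<or> lt z y" if "y \<noteq> z" for y z
  proof -
    have "r y \<noteq> r z" using rinj that by (simp add: inj_eq)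
    then show ?thesis unfolding lt_def by auto
  qed
  have winj: "inj w"
  proof (rule injI, rule ccontr)
    fix y z assume "w y = w z" "y \<noteq> z"
    then show False using tot lt_w by (metis less_irrefl)
  qed
  have mono: "\<forall>i j. w i \<le> w j \<longrightarrow> a $ i \<le> a $ j"
  proof (intro allI impI, rule ccontr)
    fix i j assume "w i \<le> w j" "\<not> a $ i \<le> a $ j"
    then have "lt j i" unfolding lt_def by auto
    then show False using lt_w \<open>w i \<le> w j\<close> by (meson not_le)
  qed
  have xin: "x \<in> nestohedron B" "a \<bullet> x = b" using ex by blast+
  have vin: "vert B w \<in> nestohedron B" by (rule vert_in[OF ne winj])
  have "a \<bullet> x \<le> a \<bullet> vert B w" by (rule nest_le[OF xin(1) winj ne mono])
  moreover have "a \<bullet> vert B w \<le> b" using hs vin by blast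
  ultimately have "a \<bullet> vert B w = b" using xin by simp
  then have "vert B w \<in> {x}" using ex vin by blast
  then show ?thesis using winj by blast
qed

lemma simplex_strict:
  fixes a :: "real^'n::finite"
  assumes t: "t \<in> I" and lt: "\<forall>y\<in>I - {t}. a $ y < a $ t" and p: "p \<in> simplex_face I"
    and pne: "p \<noteq> axis t 1"
  shows "a \<bullet> p < a $ t"
proof (cases "I - {t} = {}")
  case True
  then have "I = {t}" using t by auto
  then show ?thesis using p pne unfolding simplex_face_def by simp
next
  case False
  have fin: "finite (I - {t})" by simp
  define M where "M = Max ((\<lambda>y. a $ y) ` (I - {t}))"
  have "M \<in> (\<lambda>y. a $ y) ` (I - {t})" unfolding M_def using False fin by (intro Max_in) auto
  then have Mlt: "M < a $ t" using lt by auto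
  have Mge: "\<forall>i\<in>I - {t}. a $ i \<le> M" unfolding M_def using fin by auto
  have eqI: "(\<lambda>i. axis i (1::real)) ` I = insert (axis t 1) ((\<lambda>i. axis i 1) ` (I - {t}))" using t by auto
  have ne: "(\<lambda>i. axis i (1::real)) ` (I - {t}) \<noteq> {}" using False by simp
  obtain u v q where uv: "u \<ge> 0" "v \<ge> 0" "u + v = 1" and q: "q \<in> convex hull ((\<lambda>i. axis i 1) ` (I - {t}))"
      and pe: "p = u *\<^sub>R axis t 1 + v *\<^sub>R q"
    using p unfolding simplex_face_def eqI convex_hull_insert[OF ne] by blast
  have aq: "a \<bullet> q \<le> M" using face_le[of q "I - {t}" a M] q Mge unfolding simplex_face_def by blast
  have ap: "a \<bullet> p = u * a $ t + v * (a \<bullet> q)" unfolding pe by (simp add: inner_add_right inner_axis)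
  show ?thesis
  proof (cases "v = 0")
    case True
    then have "u = 1" using uv by simp
    then have "p = axis t 1" using pe True by simp
    then show ?thesis using pne by simp
  next
    case False
    then have "v > 0" using uv by simp
    then have "v * (a \<bullet> q) < v * a $ t" using aq Mlt by (intro mult_strict_left_mono) auto
    then have "a \<bullet> p < u * a $ t + v * a $ t" using ap by simp
    also have "\<dots> = (u + v) * a $ t" by (simp add: distrib_right)
    also have "\<dots> = a $ t" using uv(3) by simp
    finally show ?thesis .
  qed
qed

lemma vert_extreme:
  fixes B :: "('n::finite) set set" and w :: "'n \<Rightarrow> nat"
  assumes ne: "{} \<notin> B" and winj: "inj w"
  shows "vert B w extreme_point_of nestohedron B"
proof -
  define a :: "real^'n" where "a = (\<chi> i. real (w i))"
  have mono: "\<forall>i j. w i \<le> w j \<longrightarrow> a $ i \<le> a $ j" unfolding a_def by simp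
  have le: "\<And>y. y \<in> nestohedron B \<Longrightarrow> a \<bullet> y \<le> a \<bullet> vert B w"
    using nest_le[OF _ winj ne mono] by blast
  have "nestohedron B \<inter> {y. a \<bullet> y = a \<bullet> vert B w} = {vert B w}"
  proof
    show "{vert B w} \<subseteq> nestohedron B \<inter> {y. a \<bullet> y = a \<bullet> vert B w}" using vert_in[OF ne winj] by blast
    show "nestohedron B \<inter> {y. a \<bullet> y = a \<bullet> vert B w} \<subseteq> {vert B w}"
    proof
      fix y assume y: "y \<in> nestohedron B \<inter> {y. a \<bullet> y = a \<bullet> vert B w}"
      obtain p where yp: "y = (\<Sum>I\<in>B. p I)" and p: "\<forall>I\<in>B. p I \<in> simplex_face I"
        using y unfolding nestohedron_def by blast
      have fI: "finite I \<and> I \<noteq> {}" if "I \<in> B" for I using ne that by auto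
      have tI: "topw w I \<in> I" "\<forall>y\<in>I. w y \<le> w (topw w I)" if "I \<in> B" for I
        using topw[OF winj] fI[OF that] by blast+
      have each: "a \<bullet> p I \<le> a $ topw w I" if "I \<in> B" for I
        using face_le[of "p I" I a] p that tI[OF that] mono by blast
      have ay: "a \<bullet> y = (\<Sum>I\<in>B. a \<bullet> p I)" unfolding yp by (simp add: inner_sum_right)
      have av: "a \<bullet> vert B w = (\<Sum>I\<in>B. a $ topw w I)" unfolding vert_def by (simp add: inner_sum_right inner_axis)
      have allp: "\<forall>I\<in>B. p I = axis (topw w I) 1"
      proof (rule ccontr)
        assume "\<not> (\<forall>I\<in>B. p I = axis (topw w I) 1)"
        then obtain I0 where I0: "I0 \<in> B" "p I0 \<noteq> axis (topw w I0) 1" by blast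
        have strict: "\<forall>z\<in>I0 - {topw w I0}. a $ z < a $ topw w I0"
        proof
          fix z assume z: "z \<in> I0 - {topw w I0}"
          then have "w z \<le> w (topw w I0)" using tI[OF I0(1)] by blast
          moreover have "w z \<noteq> w (topw w I0)" using z winj by (auto simp: inj_eq)
          ultimately show "a $ z < a $ topw w I0" unfolding a_def by simp
        qed
        have "a \<bullet> p I0 < a $ topw w I0"
          by (rule simplex_strict[OF tI(1)[OF I0(1)] strict p[rule_format, OF I0(1)] I0(2)])
        then have "(\<Sum>I\<in>B. a \<bullet> p I) < (\<Sum>I\<in>B. a $ topw w I)"
          using each I0(1) by (intro sum_strict_mono_ex1) auto
        then show False using y ay av by simp
      qed
      have "y = vert B w" unfolding yp vert_def using allp by (intro sum.cong) auto
      then show "y \<in> {vert B w}" by simp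
    qed
  qed
  then show ?thesis using le by (intro extreme_point_of_Int_supporting_hyperplane_le) auto
qed

lemma ncount_sym: "ncount B k i j = ncount B k j i"
  unfolding ncount_def by (rule arg_cong[where f = card]) auto

lemma Dcnt_step:
  fixes B :: "('n::finite) set set"
  assumes k: "k \<notin> Q"
  shows "Dcnt B (insert k Q) a b = Dcnt B Q a b
     + int (ncount (restrict_bset B (insert k Q)) b a k) - int (ncount (restrict_bset B (insert k Q)) a b k)"
proof -
  have e1: "{I\<in>B. I \<subseteq> insert k Q \<and> a \<in> I \<and> b \<notin> I}
      = {I\<in>B. I \<subseteq> Q \<and> a \<in> I \<and> b \<notin> I} \<union> {I \<in> restrict_bset B (insert k Q). a \<in> I \<and> k \<in> I \<and> b \<notin> I}"
    unfolding restrict_bset_def by auto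
  have d1: "{I\<in>B. I \<subseteq> Q \<and> a \<in> I \<and> b \<notin> I} \<inter> {I \<in> restrict_bset B (insert k Q). a \<in> I \<and> k \<in> I \<and> b \<notin> I} = {}"
    using k by auto
  have e2: "{I\<in>B. I \<subseteq> insert k Q \<and> b \<in> I \<and> a \<notin> I}
      = {I\<in>B. I \<subseteq> Q \<and> b \<in> I \<and> a \<notin> I} \<union> {I \<in> restrict_bset B (insert k Q). b \<in> I \<and> k \<in> I \<and> a \<notin> I}"
    unfolding restrict_bset_def by auto
  have d2: "{I\<in>B. I \<subseteq> Q \<and> b \<in> I \<and> a \<notin> I} \<inter> {I \<in> restrict_bset B (insert k Q). b \<in> I \<and> k \<in> I \<and> a \<notin> I} = {}"
    using k by auto
  have c1: "card ({I\<in>B. I \<subseteq> Q \<and> a \<in> I \<and> b \<notin> I} \<union> {I \<in> restrict_bset B (insert k Q). a \<in> I \<and> k \<in> I \<and> b \<notin> I})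
     = card {I\<in>B. I \<subseteq> Q \<and> a \<in> I \<and> b \<notin> I} + card {I \<in> restrict_bset B (insert k Q). a \<in> I \<and> k \<in> I \<and> b \<notin> I}"
    by (rule card_Un_disjoint[OF _ _ d1]) simp_all
  have c2: "card ({I\<in>B. I \<subseteq> Q \<and> b \<in> I \<and> a \<notin> I} \<union> {I \<in> restrict_bset B (insert k Q). b \<in> I \<and> k \<in> I \<and> a \<notin> I})
     = card {I\<in>B. I \<subseteq> Q \<and> b \<in> I \<and> a \<notin> I} + card {I \<in> restrict_bset B (insert k Q). b \<in> I \<and> k \<in> I \<and> a \<notin> I}"
    by (rule card_Un_disjoint[OF _ _ d2]) simp_all
  have n1: "ncount (restrict_bset B (insert k Q)) b a k = card {I \<in> restrict_bset B (insert k Q). a \<in> I \<and> k \<in> I \<and> b \<notin> I}"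
    unfolding ncount_def ..
  have n2: "ncount (restrict_bset B (insert k Q)) a b k = card {I \<in> restrict_bset B (insert k Q). b \<in> I \<and> k \<in> I \<and> a \<notin> I}"
    unfolding ncount_def ..
  show ?thesis
    unfolding Dcnt_def e1 e2 c1 c2 n1 n2 by simp
qed

definition COND :: "('n::finite) set set \<Rightarrow> bool" where
  "COND B \<longleftrightarrow> (\<forall>J. \<forall>i\<in>J. \<forall>j\<in>J. \<forall>k\<in>J.
       ncount (restrict_bset B J) k i j > 0 \<and> ncount (restrict_bset B J) i j k > 0 \<longrightarrow>
       ncount (restrict_bset B J) k i j = ncount (restrict_bset B J) i j k \<and>
       ncount (restrict_bset B J) i j k = ncount (restrict_bset B J) j i k)"

lemma Dcnt_const:
  fixes B :: "('n::finite) set set"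
  assumes C: "COND B" and I0: "I0 \<in> B" "I0 \<subseteq> P" "a \<in> I0" "b \<in> I0"
  shows "finite F \<Longrightarrow> Dcnt B (P \<union> F) a b = Dcnt B P a b"
proof (induction F rule: finite_induct)
  case empty
  then show ?case by simp
next
  case (insert k F)
  show ?case
  proof (cases "k \<in> P \<union> F")
    case True
    then have "P \<union> insert k F = P \<union> F" by auto
    then show ?thesis using insert.IH by simp
  next
    case False
    define Q where "Q = P \<union> F"
    define BJ where "BJ = restrict_bset B (insert k Q)"
    have kQ: "k \<notin> Q" using False Q_def by simp
    have PiQ: "P \<union> insert k F = insert k Q" unfolding Q_def by auto
    have mem: "a \<in> insert k Q" "b \<in> insert k Q" "k \<in> insert k Q" using I0 unfolding Q_def by auto
    have "I0 \<in> {I \<in> BJ. a \<in> I \<and> b \<in> I \<and> k \<notin> I}"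
      using I0 kQ unfolding BJ_def restrict_bset_def Q_def by auto
    then have "{I \<in> BJ. a \<in> I \<and> b \<in> I \<and> k \<notin> I} \<noteq> {}" by blast
    then have pos: "ncount BJ k a b > 0" unfolding ncount_def by (simp add: card_gt_0_iff)
    have pos': "ncount BJ k b a > 0" using pos ncount_sym by metis
    have CJ: "\<forall>i\<in>insert k Q. \<forall>j\<in>insert k Q. \<forall>k'\<in>insert k Q.
       ncount BJ k' i j > 0 \<and> ncount BJ i j k' > 0 \<longrightarrow>
       ncount BJ k' i j = ncount BJ i j k' \<and> ncount BJ i j k' = ncount BJ j i k'"
      using spec[OF C[unfolded COND_def], of "insert k Q"] unfolding BJ_def .
    note CC = CJ[rule_format]
    have c1: "ncount BJ k b a > 0 \<and> ncount BJ b a k > 0 \<longrightarrow> ncount BJ b a k = ncount BJ a b k"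
      using CC[OF mem(2) mem(1) mem(3)] by blast
    have c2: "ncount BJ k a b > 0 \<and> ncount BJ a b k > 0 \<longrightarrow> ncount BJ a b k = ncount BJ b a k"
      using CC[OF mem(1) mem(2) mem(3)] by blast
    have eq: "ncount BJ b a k = ncount BJ a b k"
    proof (cases "ncount BJ b a k > 0")
      case True
      then show ?thesis using c1 pos' by blast
    next
      case f1: False
      show ?thesis
      proof (cases "ncount BJ a b k > 0")
        case True
        then show ?thesis using c2 pos by simp
      next
        case False
        then show ?thesis using f1 by simp
      qed
    qed
    show ?thesis unfolding PiQ Dcnt_step[OF kQ] BJ_def[symmetric] eq using insert.IH Q_def by simp
  qed
qed

definition degv :: "('n::finite) set set \<Rightarrow> real^'n" where
  "degv B = (\<chi> x. real (card {I\<in>B. x \<in> I}))"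

lemma Dcnt_UNIV: "real_of_int (Dcnt B UNIV a b) = degv B $ a - degv B $ b"
proof -
  have fB: "finite B" by simp
  have ea: "{I\<in>B. a \<in> I} = {I\<in>B. a \<in> I \<and> b \<notin> I} \<union> {I\<in>B. a \<in> I \<and> b \<in> I}" by auto
  have eb: "{I\<in>B. b \<in> I} = {I\<in>B. b \<in> I \<and> a \<notin> I} \<union> {I\<in>B. a \<in> I \<and> b \<in> I}" by auto
  have "card {I\<in>B. a \<in> I} = card {I\<in>B. a \<in> I \<and> b \<notin> I} + card {I\<in>B. a \<in> I \<and> b \<in> I}"
    unfolding ea by (rule card_Un_disjoint) auto
  moreover have "card {I\<in>B. b \<in> I} = card {I\<in>B. b \<in> I \<and> a \<notin> I} + card {I\<in>B. a \<in> I \<and> b \<in> I}"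
    unfolding eb by (rule card_Un_disjoint) auto
  ultimately show ?thesis unfolding Dcnt_def degv_def by simp
qed

lemma swap_invariant:
  fixes B :: "('n::finite) set set" and w :: "'n \<Rightarrow> 'a::linorder"
  assumes C: "COND B" and ne: "{} \<notin> B" and inj: "inj w" and ab: "w a < w b"
    and adj: "\<forall>c. \<not> (w a < w c \<and> w c < w b)"
  shows "norm (vert B (w(a := w b, b := w a)) - degv B) = norm (vert B w - degv B)"
proof -
  define N where "N = card {I\<in>B. I \<subseteq> {x. w x \<le> w b} \<and> a \<in> I \<and> b \<in> I}"
  have sd: "(norm (vert B (w(a := w b, b := w a)) - degv B))\<^sup>2 - (norm (vert B w - degv B))\<^sup>2
     = 2 * real N * (real_of_int (Dcnt B {x. w x \<le> w b} a b) - degv B $ a + degv B $ b)"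
    unfolding N_def by (rule swap_dist[OF inj ab adj ne])
  have "2 * real N * (real_of_int (Dcnt B {x. w x \<le> w b} a b) - degv B $ a + degv B $ b) = 0"
  proof (cases "N = 0")
    case False
    then have "{I\<in>B. I \<subseteq> {x. w x \<le> w b} \<and> a \<in> I \<and> b \<in> I} \<noteq> {}"
      unfolding N_def by (metis card.empty)
    then obtain I0 where I0: "I0 \<in> B" "I0 \<subseteq> {x. w x \<le> w b}" "a \<in> I0" "b \<in> I0"
      by blast
    have "Dcnt B ({x. w x \<le> w b} \<union> UNIV) a b = Dcnt B {x. w x \<le> w b} a b"
      by (rule Dcnt_const[OF C I0]) simp
    then have "Dcnt B {x. w x \<le> w b} a b = Dcnt B UNIV a b" by simp
    then have "real_of_int (Dcnt B {x. w x \<le> w b} a b) = degv B $ a - degv B $ b"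
      using Dcnt_UNIV[of B a b] by simp
    then show ?thesis by simp
  qed simp
  then have "(norm (vert B (w(a := w b, b := w a)) - degv B))\<^sup>2 - (norm (vert B w - degv B))\<^sup>2 = 0"
    using sd by linarith
  then have "(norm (vert B (w(a := w b, b := w a)) - degv B))\<^sup>2 = (norm (vert B w - degv B))\<^sup>2"
    by linarith
  then show ?thesis by (simp add: power2_eq_iff_nonneg)
qed

lemma swap_order:
  fixes w :: "'n \<Rightarrow> 'a::linorder"
  assumes inj: "inj w" and ab: "w a < w b" and adj: "\<forall>c. \<not> (w a < w c \<and> w c < w b)"
    and nab: "\<not> (x = a \<and> y = b)" "\<not> (x = b \<and> y = a)"
  shows "(w(a := w b, b := w a)) x < (w(a := w b, b := w a)) y \<longleftrightarrow> w x < w y"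
proof -
  have anb: "a \<noteq> b" using ab by auto
  have H1: "w a < w z \<longleftrightarrow> w b < w z" if "z \<noteq> b" for z
  proof
    assume "w a < w z"
    moreover have "w z \<noteq> w b" using inj that by (simp add: inj_eq)
    ultimately show "w b < w z" using adj by (meson linorder_neqE)
  next
    assume "w b < w z" then show "w a < w z" using ab by simp
  qed
  have H2: "w z < w b \<longleftrightarrow> w z < w a" if "z \<noteq> a" for z
  proof
    assume "w z < w b"
    moreover have "w z \<noteq> w a" using inj that by (simp add: inj_eq)
    ultimately show "w z < w a" using adj by (meson linorder_neqE)
  next
    assume "w z < w a" then show "w z < w b" using ab by simp
  qed
  show ?thesis
  proof (cases "x = a")
    case xa: True
    then have yb: "y \<noteq> b" using nab by blast
    show ?thesis
    proof (cases "y = a")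
      case True then show ?thesis using xa by simp
    next
      case False then show ?thesis using xa yb anb H1[OF yb] by simp
    qed
  next
    case xna: False
    show ?thesis
    proof (cases "x = b")
      case xb: True
      then have ya: "y \<noteq> a" using nab by blast
      show ?thesis
      proof (cases "y = b")
        case True then show ?thesis using xb by simp
      next
        case False then show ?thesis using xb ya anb H1[OF False] by simp
      qed
    next
      case xnb: False
      show ?thesis
      proof (cases "y = a")
        case True then show ?thesis using xna xnb anb H2[OF xna] by simp
      next
        case yna: False
        show ?thesis
        proof (cases "y = b")
          case True then show ?thesis using xna xnb yna anb H2[OF xna] by simp
        next
          case False then show ?thesis using xna xnb yna by simp
        qed
      qed
    qed
  qed
qed

lemma order_invariant:
  fixes G :: "('n::finite \<Rightarrow> 'a::linorder) \<Rightarrow> real" and w0 :: "'n \<Rightarrow> 'b::linorder"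
  assumes w0: "inj w0"
    and swp: "\<And>w a b. inj w \<Longrightarrow> w a < w b \<Longrightarrow> (\<forall>c. \<not> (w a < w c \<and> w c < w b))
       \<Longrightarrow> G (w(a := w b, b := w a)) = G w"
    and base: "\<And>w. inj w \<Longrightarrow> (\<forall>x y. w x < w y \<longrightarrow> w0 x < w0 y) \<Longrightarrow> G w = g0"
  shows "inj w \<Longrightarrow> G w = g0"
proof (induction "card {(x,y). w x < w y \<and> w0 y < w0 x}" arbitrary: w rule: less_induct)
  case less
  define inv where "inv = {(x,y). w x < w y \<and> w0 y < w0 x}"
  show ?case
  proof (cases "inv = {}")
    case True
    have "\<forall>x y. w x < w y \<longrightarrow> w0 x < w0 y"
    proof (intro allI impI)
      fix x y assume h: "w x < w y"
      then have "x \<noteq> y" by auto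
      then have "w0 x \<noteq> w0 y" using w0 by (simp add: inj_eq)
      moreover have "\<not> w0 y < w0 x" using True h unfolding inv_def by blast
      ultimately show "w0 x < w0 y" by simp
    qed
    then show ?thesis by (rule base[OF less.prems])
  next
    case False
    define m where "m p = card {c. w (fst p) < w c \<and> w c < w (snd p)}" for p
    obtain p0 where p0: "p0 \<in> inv" using False by blast
    obtain p where p: "p \<in> inv" and pmin: "\<forall>q. q \<in> inv \<longrightarrow> m p \<le> m q"
      using ex_has_least_nat[of "\<lambda>q. q \<in> inv" p0 m] p0 by blast
    obtain a b where pab: "p = (a,b)" by (cases p)
    have "(a,b) \<in> inv" using p pab by simp
    then have ab: "w a < w b" "w0 b < w0 a" unfolding inv_def by simp_all
    have adj: "\<forall>c. \<not> (w a < w c \<and> w c < w b)"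
    proof (rule ccontr)
      assume "\<not> (\<forall>c. \<not> (w a < w c \<and> w c < w b))"
      then obtain c where c: "w a < w c" "w c < w b" by blast
      have sub1: "{d. w a < w d \<and> w d < w c} \<subset> {d. w a < w d \<and> w d < w b}"
      proof (rule psubsetI)
        show "{d. w a < w d \<and> w d < w c} \<subseteq> {d. w a < w d \<and> w d < w b}"
          using c(2) by (blast intro: less_trans)
        have "c \<in> {d. w a < w d \<and> w d < w b}" "c \<notin> {d. w a < w d \<and> w d < w c}" using c by auto
        then show "{d. w a < w d \<and> w d < w c} \<noteq> {d. w a < w d \<and> w d < w b}" by blast
      qed
      have sub2: "{d. w c < w d \<and> w d < w b} \<subset> {d. w a < w d \<and> w d < w b}"
      proof (rule psubsetI)
        show "{d. w c < w d \<and> w d < w b} \<subseteq> {d. w a < w d \<and> w d < w b}"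
          using c(1) by (blast intro: less_trans)
        have "c \<in> {d. w a < w d \<and> w d < w b}" "c \<notin> {d. w c < w d \<and> w d < w b}" using c by auto
        then show "{d. w c < w d \<and> w d < w b} \<noteq> {d. w a < w d \<and> w d < w b}" by blast
      qed
      show False
      proof (cases "w0 c < w0 a")
        case True
        then have "(a,c) \<in> inv" using c unfolding inv_def by auto
        then have "m p \<le> m (a,c)" using pmin by blast
        moreover have "m (a,c) < m p" unfolding m_def pab using sub1 by (simp add: psubset_card_mono)
        ultimately show False by simp
      next
        case False
        have "a \<noteq> c" using c by auto
        then have "w0 a \<noteq> w0 c" using w0 by (simp add: inj_eq)
        then have "w0 a < w0 c" using False by simp
        then have "(c,b) \<in> inv" using c ab unfolding inv_def by auto
        then have "m p \<le> m (c,b)" using pmin by blast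
        moreover have "m (c,b) < m p" unfolding m_def pab using sub2 by (simp add: psubset_card_mono)
        ultimately show False by simp
      qed
    qed
    define w' where "w' = w(a := w b, b := w a)"
    have inj': "inj w'" unfolding w'_def by (rule swap_inj[OF less.prems])
    have inv': "{(x,y). w' x < w' y \<and> w0 y < w0 x} = inv - {(a,b)}"
    proof (rule set_eqI)
      fix z :: "'n \<times> 'n"
      obtain x y where z: "z = (x,y)" by (cases z)
      show "z \<in> {(x,y). w' x < w' y \<and> w0 y < w0 x} \<longleftrightarrow> z \<in> inv - {(a,b)}"
      proof (cases "x = a \<and> y = b")
        case True
        have "\<not> w' a < w' b" unfolding w'_def using ab by auto
        then show ?thesis using True z by simp
      next
        case nab: False
        show ?thesis
        proof (cases "x = b \<and> y = a")
          case True
          have "\<not> w0 a < w0 b" using ab by simp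
          moreover have "\<not> w b < w a" using ab by simp
          ultimately show ?thesis using True z unfolding inv_def by auto
        next
          case False
          have "w' x < w' y \<longleftrightarrow> w x < w y"
            unfolding w'_def by (rule swap_order[OF less.prems ab(1) adj nab False])
          then show ?thesis using z nab unfolding inv_def by auto
        qed
      qed
    qed
    have "card (inv - {(a,b)}) < card inv" by (rule card_Diff1_less[OF finite \<open>(a,b) \<in> inv\<close>])
    then have "card {(x,y). w' x < w' y \<and> w0 y < w0 x} < card {(x,y). w x < w y \<and> w0 y < w0 x}"
      unfolding inv' inv_def .
    then have "G w' = g0" by (rule less.hyps[OF _ inj'])
    moreover have "G w' = G w" unfolding w'_def by (rule swp[OF less.prems ab(1) adj])
    ultimately show ?thesis by simp
  qed
qed

lemma insc_D:
  fixes B :: "('n::finite) set set" and c :: "real^'n"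
  assumes ne: "{} \<notin> B" and sph: "{v. v extreme_point_of nestohedron B} \<subseteq> sphere c r"
    and anb: "a \<noteq> b" and I0: "I0 \<in> B" "I0 \<subseteq> P" "a \<in> I0" "b \<in> I0"
  shows "real_of_int (Dcnt B P a b) = c $ a - c $ b"
proof -
  obtain r0 :: "'n \<Rightarrow> nat" and n where r0: "r0 ` UNIV = {i. i < n}" "inj_on r0 UNIV"
    using finite_imp_inj_to_nat_seg[of "UNIV :: 'n set"] by auto
  have r0lt: "r0 x < n" for x using r0(1) by auto
  have r0inj: "r0 x = r0 y \<Longrightarrow> x = y" for x y using r0(2) by (simp add: inj_on_eq_iff)
  define w :: "'n \<Rightarrow> nat" where
    "w x = (if x = a then n else if x = b then Suc n else if x \<in> P then r0 x else 2 * n + 2 + r0 x)" for x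
  have winj: "inj w"
  proof (rule injI)
    fix x y assume h: "w x = w y"
    show "x = y"
      using h r0lt[of x] r0lt[of y] r0inj[of x y] anb unfolding w_def by (auto split: if_splits)
  qed
  have ab: "w a < w b" using anb unfolding w_def by simp
  have adj: "\<forall>c. \<not> (w a < w c \<and> w c < w b)" using anb unfolding w_def by auto
  have aP: "a \<in> P" "b \<in> P" using I0 by auto
  have Peq: "{x. w x \<le> w b} = P"
  proof (rule set_eqI)
    fix x show "x \<in> {x. w x \<le> w b} \<longleftrightarrow> x \<in> P"
      using aP anb r0lt[of x] unfolding w_def by auto
  qed
  define N where "N = card {I\<in>B. I \<subseteq> {x. w x \<le> w b} \<and> a \<in> I \<and> b \<in> I}"
  have sd: "(norm (vert B (w(a := w b, b := w a)) - c))\<^sup>2 - (norm (vert B w - c))\<^sup>2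
     = 2 * real N * (real_of_int (Dcnt B {x. w x \<le> w b} a b) - c $ a + c $ b)"
    unfolding N_def by (rule swap_dist[OF winj ab adj ne])
  have e1: "vert B w \<in> sphere c r" using sph vert_extreme[OF ne winj] by blast
  have e2: "vert B (w(a := w b, b := w a)) \<in> sphere c r"
    using sph vert_extreme[OF ne swap_inj[OF winj]] by blast
  have "norm (vert B (w(a := w b, b := w a)) - c) = norm (vert B w - c)"
    using e1 e2 by (simp add: dist_norm norm_minus_commute)
  then have z: "2 * real N * (real_of_int (Dcnt B P a b) - c $ a + c $ b) = 0"
    using sd unfolding Peq by simp
  have "I0 \<in> {I\<in>B. I \<subseteq> {x. w x \<le> w b} \<and> a \<in> I \<and> b \<in> I}" using I0 unfolding Peq by simp
  then have "N > 0" unfolding N_def by (auto simp: card_gt_0_iff)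
  then show ?thesis using z by simp
qed

lemma nonCOND:
  fixes B :: "('n::finite) set set"
  assumes "\<not> COND B"
  shows "\<exists>J a b k. a \<in> J \<and> b \<in> J \<and> k \<in> J \<and> ncount (restrict_bset B J) k a b > 0 \<and>
     ncount (restrict_bset B J) b a k \<noteq> ncount (restrict_bset B J) a b k"
proof -
  obtain J i j k where ijk: "i \<in> J" "j \<in> J" "k \<in> J"
    and x: "ncount (restrict_bset B J) k i j > 0" and y: "ncount (restrict_bset B J) i j k > 0"
    and ne: "\<not> (ncount (restrict_bset B J) k i j = ncount (restrict_bset B J) i j k \<and>
       ncount (restrict_bset B J) i j k = ncount (restrict_bset B J) j i k)"
    using assms unfolding COND_def by blast
  define BJ where "BJ = restrict_bset B J"
  note defs = BJ_def[symmetric]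
  show ?thesis
  proof (cases "ncount BJ i j k = ncount BJ j i k")
    case False
    then show ?thesis using ijk x unfolding BJ_def by (metis ncount_sym)
  next
    case True
    then have "ncount BJ k i j \<noteq> ncount BJ i j k" using ne unfolding BJ_def by simp
    then have "ncount BJ k j i \<noteq> ncount BJ j k i" using True ncount_sym by metis
    then show ?thesis using ijk y unfolding BJ_def by blast
  qed
qed

theorem theorem4p19:
  fixes B :: "('n::finite) set set"
  assumes "building_set B"
  shows "inscribed (nestohedron B) \<longleftrightarrow>
    (\<forall>J. \<forall>i\<in>J. \<forall>j\<in>J. \<forall>k\<in>J.
       ncount (restrict_bset B J) k i j > 0 \<and> ncount (restrict_bset B J) i j k > 0 \<longrightarrow>
       ncount (restrict_bset B J) k i j = ncount (restrict_bset B J) i j k \<and>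
       ncount (restrict_bset B J) i j k = ncount (restrict_bset B J) j i k)"
proof -
  have ne: "{} \<notin> B" using assms unfolding building_set_def by blast
  have "inscribed (nestohedron B) \<longleftrightarrow> COND B"
  proof
    assume "inscribed (nestohedron B)"
    then obtain c :: "real^'n" and r where sph: "{v. v extreme_point_of nestohedron B} \<subseteq> sphere c r"
      unfolding inscribed_def by blast
    show "COND B"
    proof (rule ccontr)
      assume nc: "\<not> COND B"
      obtain J a b k where m: "a \<in> J" "b \<in> J" "k \<in> J"
        and pos: "ncount (restrict_bset B J) k a b > 0"
        and neq: "ncount (restrict_bset B J) b a k \<noteq> ncount (restrict_bset B J) a b k"
        using nonCOND[OF nc] by (elim exE conjE)
      have anb: "a \<noteq> b" using neq by auto
      have "{I \<in> restrict_bset B J. a \<in> I \<and> b \<in> I \<and> k \<notin> I} \<noteq> {}"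
        using pos unfolding ncount_def card_gt_0_iff by (elim conjE)
      then obtain I0 where I0: "I0 \<in> B" "I0 \<subseteq> J" "a \<in> I0" "b \<in> I0" "k \<notin> I0"
        unfolding restrict_bset_def by blast
      have I0': "I0 \<subseteq> J - {k}" using I0 by auto
      have d1: "real_of_int (Dcnt B (J - {k}) a b) = c $ a - c $ b"
        by (rule insc_D[OF ne sph anb I0(1) I0' I0(3,4)])
      have d2: "real_of_int (Dcnt B J a b) = c $ a - c $ b"
        by (rule insc_D[OF ne sph anb I0(1,2,3,4)])
      have Jk: "insert k (J - {k}) = J" using m by auto
      have "Dcnt B J a b = Dcnt B (J - {k}) a b
         + int (ncount (restrict_bset B J) b a k) - int (ncount (restrict_bset B J) a b k)"
        using Dcnt_step[of k "J - {k}" B a b] unfolding Jk by simp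
      then have "Dcnt B J a b - Dcnt B (J - {k}) a b =
          int (ncount (restrict_bset B J) b a k) - int (ncount (restrict_bset B J) a b k)" by simp
      moreover have "Dcnt B J a b = Dcnt B (J - {k}) a b" using d1 d2 by linarith
      ultimately show False using neq by simp
    qed
  next
    assume C: "COND B"
    obtain w0 :: "'n \<Rightarrow> nat" and n where "w0 ` UNIV = {i. i < n}" "inj_on w0 UNIV"
      using finite_imp_inj_to_nat_seg[of "UNIV :: 'n set"] by auto
    then have w0: "inj w0" by simp
    have same: "norm (vert B w - degv B) = norm (vert B w0 - degv B)" if "inj w" for w :: "'n \<Rightarrow> nat"
    proof (rule order_invariant[where G = "\<lambda>w. norm (vert B w - degv B)", OF w0 _ _ that])
      fix w :: "'n \<Rightarrow> nat" and a b
      assume "inj w" "w a < w b" "\<forall>c. \<not> (w a < w c \<and> w c < w b)"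
      then show "norm (vert B (w(a := w b, b := w a)) - degv B) = norm (vert B w - degv B)"
        by (rule swap_invariant[OF C ne])
    next
      fix w :: "'n \<Rightarrow> nat"
      assume wi: "inj w" and ord: "\<forall>x y. w x < w y \<longrightarrow> w0 x < w0 y"
      have "topw w I = topw w0 I" if "I \<in> B" for I
      proof -
        have fI: "finite I" "I \<noteq> {}" using that ne by auto
        define t where "t = topw w I"
        have t: "t \<in> I" "\<forall>y\<in>I. w y \<le> w t" unfolding t_def by (rule topw[OF wi fI])+
        have "\<forall>y\<in>I. w0 y \<le> w0 t"
        proof
          fix y assume y: "y \<in> I"
          show "w0 y \<le> w0 t"
          proof (cases "y = t")
            case False
            then have "w y \<noteq> w t" using wi by (simp add: inj_eq)
            moreover have "w y \<le> w t" using t(2) y by blast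
            ultimately have "w y < w t" by simp
            then show ?thesis using ord by (simp add: less_imp_le)
          qed simp
        qed
        then have "topw w0 I = t" by (rule topw_eq[OF w0 t(1)])
        then show ?thesis using t_def by simp
      qed
      then have "vert B w = vert B w0" unfolding vert_def by (intro sum.cong) auto
      then show "norm (vert B w - degv B) = norm (vert B w0 - degv B)" by simp
    qed
    have "{v. v extreme_point_of nestohedron B} \<subseteq> sphere (degv B) (norm (vert B w0 - degv B))"
    proof
      fix x assume "x \<in> {v. v extreme_point_of nestohedron B}"
      then obtain w :: "'n \<Rightarrow> nat" where w: "inj w" "x = vert B w"
        using extreme_is_vert[OF ne] by blast
      have "dist (degv B) x = norm (vert B w - degv B)"
        using w by (simp add: dist_norm norm_minus_commute)
      then show "x \<in> sphere (degv B) (norm (vert B w0 - degv B))" using same[OF w(1)] by simp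
    qed
    then show "inscribed (nestohedron B)" unfolding inscribed_def by blast
  qed
  then show ?thesis unfolding COND_def .
qed

end
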